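(* Let $\nu\in\mathcal{P}_2(\mathbb{R}^2)$, $\gamma\in\Gamma(\nu)$, and $\mu$ the $x$-marginal of $\gamma$. For every $G\in\mathfrak{M}$, $$\gamma\big(\phi_G(y)-c(x,y)\,\big|\,x\big)\le\phi_G(x)\le0,\qquad\gamma\text{-a.s.},$$ and consequently $$\int\phi_G(y)\,d\nu-\int c(x,y)\,d\gamma\le\int\phi_G(x)\,d\mu\le0.$$
   Context: $c(x,y)=(x_1-y_1)(x_2-y_2)$ for $x,y\in\mathbb{R}^2$. $\mathcal{P}_2(\mathbb{R}^d)$: Borel probability measures with finite second moment. $\Gamma(\nu)$: the set of $\gamma\in\mathcal{P}_2(\mathbb{R}^2\times\mathbb{R}^2)$ (points $(x,y)$) with $y$-marginal $\nu$ and $\gamma(y|x)=x$. For a function $f$, $\gamma(f|x)$ denotes the conditional expectation of $f$ given the coordinate $x$ under $\gamma$. $\mathfrak{M}$: family of maximal monotone sets $G\subset\mathbb{R}^2$ (monotone: $c(r,s)\ge0$ for $r,s\in G$; maximal: not a proper subset of a monotone set). $\phi_G(y)=\inf_{x\in G}c(x,y)\in[-\infty,0]$. *)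

theory Defs
  imports "HOL-Probability.Probability"
begin

definition cost :: "real \<times> real \<Rightarrow> real \<times> real \<Rightarrow> real" where
  "cost x y = (fst x - fst y) * (snd x - snd y)"

definition P2 :: "('a::euclidean_space) measure \<Rightarrow> bool" where
  "P2 M \<longleftrightarrow> prob_space M \<and> sets M = sets borel \<and> integrable M (\<lambda>z. (norm z)\<^sup>2)"

definition sigma_x :: "(('a::topological_space) \<times> ('b::topological_space)) measure
    \<Rightarrow> ('a \<times> 'b) measure" where
  "sigma_x M = vimage_algebra (space M) fst borel"

text \<open>Conditional expectation of an extended-real valued function, defined as the
  difference of the conditional expectations of its positive and negative parts
  (exactly as the library's real_cond_exp, but allowing the values -infinity/+infinity).\<close>
definition ereal_cond_exp :: "'a measure \<Rightarrow> 'a measure \<Rightarrow> ('a \<Rightarrow> ereal) \<Rightarrow> 'a \<Rightarrow> ereal" where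
  "ereal_cond_exp M F f w =
     enn2ereal (nn_cond_exp M F (\<lambda>v. e2ennreal (f v)) w)
   - enn2ereal (nn_cond_exp M F (\<lambda>v. e2ennreal (- f v)) w)"

definition ereal_integral :: "'a measure \<Rightarrow> ('a \<Rightarrow> ereal) \<Rightarrow> ereal" where
  "ereal_integral M f =
     enn2ereal (\<integral>\<^sup>+ v. e2ennreal (f v) \<partial>M) - enn2ereal (\<integral>\<^sup>+ v. e2ennreal (- f v) \<partial>M)"

definition Gamma :: "(real \<times> real) measure \<Rightarrow> ((real \<times> real) \<times> (real \<times> real)) measure \<Rightarrow> bool" where
  "Gamma \<nu> \<gamma> \<longleftrightarrow> P2 \<gamma> \<and> distr \<gamma> borel snd = \<nu>
     \<and> (AE z in \<gamma>. real_cond_exp \<gamma> (sigma_x \<gamma>) (\<lambda>w. fst (snd w)) z = fst (fst z))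
     \<and> (AE z in \<gamma>. real_cond_exp \<gamma> (sigma_x \<gamma>) (\<lambda>w. snd (snd w)) z = snd (fst z))"

definition monotone_set :: "(real \<times> real) set \<Rightarrow> bool" where
  "monotone_set G \<longleftrightarrow> (\<forall>r\<in>G. \<forall>s\<in>G. cost r s \<ge> 0)"

definition maximal_monotone :: "(real \<times> real) set \<Rightarrow> bool" where
  "maximal_monotone G \<longleftrightarrow> monotone_set G \<and> \<not> (\<exists>H. monotone_set H \<and> G \<subset> H)"

definition phi :: "(real \<times> real) set \<Rightarrow> real \<times> real \<Rightarrow> ereal" where
  "phi G y = (INF x\<in>G. ereal (cost x y))"

end

theory Submission
  imports Defs
begin


lemma pw1:
  fixes Ah Ak Bh Bk :: ennreal
  assumes "Ah \<le> Ak" "Ak \<noteq> \<infinity>" "Bk \<le> Bh" "Bk \<noteq> \<infinity>" "enn2real Ak - enn2real Bk = c"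
  shows "enn2ereal Ah - enn2ereal Bh \<le> ereal c"
proof (cases "Bh = \<infinity>")
  case True
  have "Ah \<noteq> \<infinity>" using assms by (metis infinity_ennreal_def neq_top_trans)
  then show ?thesis using True by (cases "enn2ereal Ah") (auto simp: infinity_ennreal_def)
next
  case False
  obtain ah where ah: "Ah = ennreal ah" "ah \<ge> 0" using assms by (metis ennreal_cases infinity_ennreal_def neq_top_trans)
  obtain ak where ak: "Ak = ennreal ak" "ak \<ge> 0" using assms by (metis ennreal_cases infinity_ennreal_def)
  obtain bh where bh: "Bh = ennreal bh" "bh \<ge> 0" using False by (metis ennreal_cases infinity_ennreal_def)
  obtain bk where bk: "Bk = ennreal bk" "bk \<ge> 0" using assms by (metis ennreal_cases infinity_ennreal_def)
  have "ah \<le> ak" "bk \<le> bh" using assms ah ak bh bk by auto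
  then show ?thesis using ah ak bh bk assms(5) by simp
qed

lemma pw2:
  fixes A B :: ennreal
  assumes "A \<noteq> \<infinity>" "enn2ereal A - enn2ereal B \<le> p" "p \<le> 0"
  shows "e2ennreal (- p) + A \<le> B"
proof (cases "B = \<infinity>")
  case True then show ?thesis by (simp add: infinity_ennreal_def)
next
  case False
  obtain a where a: "A = ennreal a" "a \<ge> 0" using assms by (metis ennreal_cases infinity_ennreal_def)
  obtain b where b: "B = ennreal b" "b \<ge> 0" using False by (metis ennreal_cases infinity_ennreal_def)
  have le: "ereal (a - b) \<le> p" using assms(2) a b by simp
  then obtain r where r: "p = ereal r" using assms(3) by (cases p) auto
  have "a - b \<le> r" "r \<le> 0" using le r assms(3) by auto
  then show ?thesis using a b r by (simp add: ennreal_plus[symmetric] del: ennreal_plus)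
qed

lemma pw3:
  fixes p :: ereal and c :: real
  assumes "p \<le> 0"
  shows "e2ennreal (- (p - ereal c)) + ennreal (- c) = e2ennreal (p - ereal c) + ennreal c + e2ennreal (- p)"
proof (cases p)
  case (real r)
  have r0: "r \<le> 0" using assms real by simp
  show ?thesis
  proof (cases "c \<ge> r")
    case True
    have "e2ennreal (- (p - ereal c)) = ennreal (c - r)" using real by simp
    moreover have "e2ennreal (p - ereal c) = 0" using real True by (simp add: ennreal_neg)
    moreover have "e2ennreal (- p) = ennreal (- r)" using real by simp
    moreover have "ennreal (c - r) + ennreal (- c) = ennreal c + ennreal (- r)"
      using True r0 by (cases "c \<ge> 0") (simp_all add: ennreal_plus[symmetric] ennreal_neg del: ennreal_plus)
    ultimately show ?thesis by simp
  next
    case False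
    have "e2ennreal (- (p - ereal c)) = 0" using real False by (simp add: ennreal_neg)
    moreover have "e2ennreal (p - ereal c) = ennreal (r - c)" using real by simp
    moreover have "e2ennreal (- p) = ennreal (- r)" using real by simp
    moreover have "ennreal (- c) = ennreal (r - c) + ennreal c + ennreal (- r)"
      using False r0 by (simp add: ennreal_plus[symmetric] ennreal_neg del: ennreal_plus)
    ultimately show ?thesis by simp
  qed
next
  case PInf then show ?thesis using assms by simp
next
  case MInf then show ?thesis by (simp add: infinity_ennreal_def)
qed

lemma pw4:
  fixes PX PY Cp Cm :: ennreal
  assumes "PX + Cm \<le> Cp + PY" "Cp \<noteq> \<infinity>" "Cm \<noteq> \<infinity>"
  shows "(0 - enn2ereal PY) - ereal (enn2real Cp - enn2real Cm) \<le> 0 - enn2ereal PX"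
proof (cases "PY = \<infinity>")
  case True then show ?thesis by (simp add: infinity_ennreal_def)
next
  case False
  obtain cp where cp: "Cp = ennreal cp" "cp \<ge> 0" using assms by (metis ennreal_cases infinity_ennreal_def)
  obtain cm where cm: "Cm = ennreal cm" "cm \<ge> 0" using assms by (metis ennreal_cases infinity_ennreal_def)
  obtain py where py: "PY = ennreal py" "py \<ge> 0" using False by (metis ennreal_cases infinity_ennreal_def)
  have "PX \<noteq> \<infinity>" using assms cp py by (metis ennreal_add_eq_top infinity_ennreal_def ennreal_plus top_neq_ennreal top_unique)
  then obtain px where px: "PX = ennreal px" "px \<ge> 0" by (metis ennreal_cases infinity_ennreal_def)
  have "px + cm \<le> cp + py" using assms(1) px cm cp py by (simp add: ennreal_plus[symmetric] del: ennreal_plus)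
  then show ?thesis using px cm cp py by simp
qed



lemma cost_sym: "cost a b = cost b a"
  unfolding cost_def by (simp add: algebra_simps)

lemma cost_self: "cost a a = 0"
  unfolding cost_def by simp

lemma mm_nonempty: assumes "maximal_monotone G" shows "G \<noteq> {}"
proof
  assume "G = {}"
  have "monotone_set {(0,0)}" unfolding monotone_set_def cost_def by simp
  then show False using assms \<open>G = {}\<close> unfolding maximal_monotone_def by blast
qed

lemma phi_le0: assumes "maximal_monotone G" shows "phi G y \<le> 0"
proof (cases "y \<in> G")
  case True
  then have "phi G y \<le> ereal (cost y y)" unfolding phi_def by (rule INF_lower)
  then show ?thesis by (simp add: cost_self zero_ereal_def)
next
  case False
  have mon: "monotone_set G" using assms unfolding maximal_monotone_def by simp
  have "G \<subset> insert y G" using False by blast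
  then have "\<not> monotone_set (insert y G)" using assms unfolding maximal_monotone_def by blast
  then obtain r s where rs: "r \<in> insert y G" "s \<in> insert y G" "cost r s < 0"
    unfolding monotone_set_def by force
  have "\<exists>g\<in>G. cost g y < 0"
  proof -
    { assume "r = y" "s = y" then have False using rs cost_self by simp }
    moreover { assume "r \<in> G" "s \<in> G" then have False using rs mon unfolding monotone_set_def by force }
    ultimately show ?thesis using rs cost_sym by (metis insert_iff)
  qed
  then obtain g where "g \<in> G" "cost g y < 0" by blast
  have "phi G y \<le> ereal (cost g y)" unfolding phi_def by (rule INF_lower[OF \<open>g \<in> G\<close>])
  then show ?thesis using \<open>cost g y < 0\<close> by (metis order_trans less_imp_le ereal_less_eq(3) zero_ereal_def)
qed

lemma continuous_cost: "continuous_on UNIV (\<lambda>g. cost g y)"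
  unfolding cost_def by (intro continuous_intros)

lemma phi_countable:
  assumes "G \<noteq> {}"
  obtains D where "countable D" "D \<subseteq> G" "D \<noteq> {}" "\<And>y. phi G y = (INF g\<in>D. ereal (cost g y))"
proof -
  obtain D where D: "countable D" "D \<subseteq> G" "G \<subseteq> closure D" by (rule separable)
  have "D \<noteq> {}" using D assms by auto
  moreover have "phi G y = (INF g\<in>D. ereal (cost g y))" for y
  proof (rule antisym)
    show "phi G y \<le> (INF g\<in>D. ereal (cost g y))" unfolding phi_def
      using D(2) by (rule INF_superset_mono) simp
    show "(INF g\<in>D. ereal (cost g y)) \<le> phi G y" unfolding phi_def
    proof (rule INF_greatest)
      fix g assume "g \<in> G"
      then have "g \<in> closure D" using D by blast
      then obtain d where d: "\<And>n. d n \<in> D" "d \<longlonglongrightarrow> g" by (auto simp: closure_sequential)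
      have "(\<lambda>n. cost (d n) y) \<longlonglongrightarrow> cost g y"
        using d(2) unfolding cost_def by (intro tendsto_intros)
      then have lim: "(\<lambda>n. ereal (cost (d n) y)) \<longlonglongrightarrow> ereal (cost g y)" by simp
      show "(INF g\<in>D. ereal (cost g y)) \<le> ereal (cost g y)"
        by (rule tendsto_lowerbound[OF lim]) (auto intro!: always_eventually INF_lower d(1))
    qed
  qed
  ultimately show ?thesis using D that by blast
qed



lemma nsq: fixes z :: "(real \<times> real) \<times> (real \<times> real)"
  shows "(norm z)^2 = (fst (fst z))^2 + (snd (fst z))^2 + (fst (snd z))^2 + (snd (snd z))^2"
  by (cases z) (auto simp: norm_Pair)

lemma absmul: fixes u v :: real shows "\<bar>u * v\<bar> \<le> u^2 + v^2"
proof -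
  have "0 \<le> (\<bar>u\<bar> - \<bar>v\<bar>)^2" by simp
  then have "2 * (\<bar>u\<bar> * \<bar>v\<bar>) \<le> \<bar>u\<bar>^2 + \<bar>v\<bar>^2" by (simp add: power2_diff)
  then have "2 * \<bar>u * v\<bar> \<le> u^2 + v^2" by (simp add: abs_mult)
  moreover have "0 \<le> \<bar>u * v\<bar>" by simp
  ultimately show ?thesis by linarith
qed

lemma abs1: fixes u :: real shows "\<bar>u\<bar> \<le> 1 + u^2"
  using absmul[of u 1] by simp

lemma sqdiff: fixes p q :: real shows "(p - q)^2 \<le> 2 * p^2 + 2 * q^2"
proof -
  have "0 \<le> (p + q)^2" by simp
  then show ?thesis by (simp add: power2_diff power2_sum)
qed

lemma cost_bound: fixes z :: "(real \<times> real) \<times> (real \<times> real)"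
  shows "\<bar>cost (fst z) (snd z)\<bar> \<le> 2 * (norm z)^2"
proof -
  have "\<bar>cost (fst z) (snd z)\<bar> \<le> (fst (fst z) - fst (snd z))^2 + (snd (fst z) - snd (snd z))^2"
    unfolding cost_def by (rule absmul)
  also have "\<dots> \<le> 2 * (norm z)^2" unfolding nsq
    using sqdiff[of "fst (fst z)" "fst (snd z)"] sqdiff[of "snd (fst z)" "snd (snd z)"]
    by (simp only: ring_distribs)
  finally show ?thesis .
qed

theorem lemma7:
  fixes \<nu> :: "(real \<times> real) measure"
    and \<gamma> :: "((real \<times> real) \<times> (real \<times> real)) measure"
    and G :: "(real \<times> real) set"
  assumes "P2 \<nu>"
    and "Gamma \<nu> \<gamma>"
    and "maximal_monotone G"
  shows "(AE z in \<gamma>.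
            ereal_cond_exp \<gamma> (sigma_x \<gamma>) (\<lambda>w. phi G (snd w) - ereal (cost (fst w) (snd w))) z
              \<le> phi G (fst z)
          \<and> phi G (fst z) \<le> 0)
       \<and> ereal_integral \<nu> (phi G) - ereal (\<integral> w. cost (fst w) (snd w) \<partial>\<gamma>)
            \<le> ereal_integral (distr \<gamma> borel fst) (phi G)
       \<and> ereal_integral (distr \<gamma> borel fst) (phi G) \<le> 0"
proof -
  have Pg: "P2 \<gamma>" and nu: "distr \<gamma> borel snd = \<nu>"
    and ce1: "AE z in \<gamma>. real_cond_exp \<gamma> (sigma_x \<gamma>) (\<lambda>w. fst (snd w)) z = fst (fst z)"
    and ce2: "AE z in \<gamma>. real_cond_exp \<gamma> (sigma_x \<gamma>) (\<lambda>w. snd (snd w)) z = snd (fst z)"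
    using assms(2) unfolding Gamma_def by auto
  interpret prob_space \<gamma> using Pg unfolding P2_def by auto
  have sg[measurable_cong]: "sets \<gamma> = sets borel" using Pg unfolding P2_def by auto
  have isq: "integrable \<gamma> (\<lambda>z. (norm z)^2)" using Pg unfolding P2_def by auto
  define F where "F = sigma_x \<gamma>"
  have fstm[measurable]: "fst \<in> measurable \<gamma> borel"
    unfolding measurable_cong_sets[OF sg refl]
    by (intro borel_measurable_continuous_onI continuous_intros)
  have sndm[measurable]: "snd \<in> measurable \<gamma> borel"
    unfolding measurable_cong_sets[OF sg refl]
    by (intro borel_measurable_continuous_onI continuous_intros)
  have subalg: "subalgebra \<gamma> F"
    unfolding subalgebra_def F_def sigma_x_def using fstm
    by (auto simp: measurable_iff_sets)
  interpret finite_measure_subalgebra \<gamma> F by unfold_locales (rule subalg)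
  have Fm: "(\<lambda>w. h (fst w)) \<in> borel_measurable F" if "h \<in> borel_measurable borel" for h :: "real \<times> real \<Rightarrow> real"
    unfolding F_def sigma_x_def
    using measurable_compose[OF measurable_vimage_algebra1[of fst "space \<gamma>" borel] that] by auto
  have i1: "integrable \<gamma> (\<lambda>z. 1 + (norm z)^2)" using isq by auto
  have intb: "integrable \<gamma> q" if "q \<in> borel_measurable \<gamma>" "\<And>z. \<bar>q z\<bar> \<le> C * (1 + (norm z)^2)" for q C
  proof -
    have iC: "integrable \<gamma> (\<lambda>z. C * (1 + (norm z)^2))" using i1 by auto
    have bnd: "norm (q z) \<le> norm (C * (1 + (norm z)^2))" for z
    proof -
      have "C * (1 + (norm z)^2) \<le> \<bar>C\<bar> * (1 + (norm z)^2)"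
        by (rule mult_right_mono) (auto intro: add_nonneg_nonneg)
      then show ?thesis using that(2)[of z] by (simp add: abs_mult)
    qed
    show ?thesis by (rule Bochner_Integration.integrable_bound[OF iC that(1) AE_I2]) (rule bnd)
  qed
  have bf1[measurable]: "(fst :: real \<times> real \<Rightarrow> real) \<in> borel_measurable borel"
    by (intro borel_measurable_continuous_onI continuous_intros)
  have bf2[measurable]: "(snd :: real \<times> real \<Rightarrow> real) \<in> borel_measurable borel"
    by (intro borel_measurable_continuous_onI continuous_intros)
  have costm[measurable]: "(\<lambda>w. cost (f w) (g w)) \<in> borel_measurable M"
    if [measurable]: "f \<in> measurable M borel" "g \<in> measurable M borel" for f g and M :: "'z measure"
    unfolding cost_def by measurable
  have X1[measurable]: "(\<lambda>w. fst (fst w)) \<in> borel_measurable \<gamma>" by measurable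
  have X2[measurable]: "(\<lambda>w. snd (fst w)) \<in> borel_measurable \<gamma>" by measurable
  have Y1[measurable]: "(\<lambda>w. fst (snd w)) \<in> borel_measurable \<gamma>" by measurable
  have Y2[measurable]: "(\<lambda>w. snd (snd w)) \<in> borel_measurable \<gamma>" by measurable
  have ic: "integrable \<gamma> (\<lambda>w. cost (fst w) (snd w))"
  proof (rule intb[of _ 2])
    fix z :: "(real \<times> real) \<times> (real \<times> real)"
    have "2 * (1 + (norm z)^2) = 2 + 2 * (norm z)^2" by simp
    then show "\<bar>cost (fst z) (snd z)\<bar> \<le> 2 * (1 + (norm z)^2)" using cost_bound[of z] by linarith
  qed measurable
  have sq0: "0 \<le> (fst (fst z))^2" "0 \<le> (snd (fst z))^2" "0 \<le> (fst (snd z))^2" "0 \<le> (snd (snd z))^2"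
    for z :: "(real \<times> real) \<times> (real \<times> real)" by simp_all
  have iprod: "integrable \<gamma> (\<lambda>w. p w * q w)"
    if [measurable]: "p \<in> borel_measurable \<gamma>" "q \<in> borel_measurable \<gamma>" 
      and pq: "\<And>z. (p z)^2 + (q z)^2 \<le> (norm z)^2" for p q
  proof (rule intb[of _ 1])
    fix z
    have "\<bar>p z * q z\<bar> \<le> (norm z)^2" using absmul[of "p z" "q z"] pq[of z] by (rule order_trans)
    then show "\<bar>p z * q z\<bar> \<le> 1 * (1 + (norm z)^2)" by simp
  qed measurable
  have icomp: "integrable \<gamma> p"
    if [measurable]: "p \<in> borel_measurable \<gamma>" and pq: "\<And>z. (p z)^2 \<le> (norm z)^2" for p
  proof (rule intb[of _ 1])
    fix z
    have "1 + (p z)^2 \<le> 1 + (norm z)^2" using pq[of z] by simp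
    then show "\<bar>p z\<bar> \<le> 1 * (1 + (norm z)^2)" using abs1[of "p z"] by simp
  qed measurable
  have iX1X2: "integrable \<gamma> (\<lambda>w. fst (fst w) * snd (fst w))"
    by (rule iprod) (auto simp: nsq intro: X1 X2 add_increasing2 sq0)
  have iX1Y2: "integrable \<gamma> (\<lambda>w. fst (fst w) * snd (snd w))"
    by (rule iprod) (auto simp: nsq intro: X1 Y2 add_increasing2 sq0)
  have iX2Y1: "integrable \<gamma> (\<lambda>w. snd (fst w) * fst (snd w))"
    by (rule iprod) (auto simp: nsq intro: X2 Y1 add_increasing2 sq0)
  have iY1: "integrable \<gamma> (\<lambda>w. fst (snd w))"
    by (rule icomp) (auto simp: nsq intro: Y1 add_increasing2 sq0)
  have iY2: "integrable \<gamma> (\<lambda>w. snd (snd w))"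
    by (rule icomp) (auto simp: nsq intro: Y2 add_increasing2 sq0)
  have rk: "AE z in \<gamma>. real_cond_exp \<gamma> F (\<lambda>w. cost g (snd w) - cost (fst w) (snd w)) z = cost g (fst z)" for g
  proof -
    obtain a b where g: "g = (a, b)" by (cases g)
    define f0 where "f0 = (\<lambda>w::(real \<times> real) \<times> (real \<times> real). a * b - fst (fst w) * snd (fst w))"
    define f1 where "f1 = (\<lambda>w::(real \<times> real) \<times> (real \<times> real). (fst (fst w) - a) * snd (snd w))"
    define f2 where "f2 = (\<lambda>w::(real \<times> real) \<times> (real \<times> real). (snd (fst w) - b) * fst (snd w))"
    have keq: "(\<lambda>w. cost g (snd w) - cost (fst w) (snd w)) = (\<lambda>w. (f0 w + f1 w) + f2 w)"
      by (rule ext) (simp add: g cost_def f0_def f1_def f2_def algebra_simps)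
    have f0F: "f0 \<in> borel_measurable F"
      using Fm[of "\<lambda>x. a * b - fst x * snd x"] unfolding f0_def by measurable
    have aF: "(\<lambda>w. fst (fst w) - a) \<in> borel_measurable F"
      using Fm[of "\<lambda>x. fst x - a"] by measurable
    have bF: "(\<lambda>w. snd (fst w) - b) \<in> borel_measurable F"
      using Fm[of "\<lambda>x. snd x - b"] by measurable
    have m0[measurable]: "f0 \<in> borel_measurable \<gamma>" "f1 \<in> borel_measurable \<gamma>" "f2 \<in> borel_measurable \<gamma>"
      unfolding f0_def f1_def f2_def by measurable
    have if0: "integrable \<gamma> f0" unfolding f0_def using iX1X2 by auto
    have "f1 = (\<lambda>w. fst (fst w) * snd (snd w) - a * snd (snd w))" unfolding f1_def by (auto simp: algebra_simps)
    then have if1: "integrable \<gamma> f1" using iX1Y2 iY2 by auto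
    have "f2 = (\<lambda>w. snd (fst w) * fst (snd w) - b * fst (snd w))" unfolding f2_def by (auto simp: algebra_simps)
    then have if2: "integrable \<gamma> f2" using iX2Y1 iY1 by auto
    have e1: "AE z in \<gamma>. real_cond_exp \<gamma> F (\<lambda>w. (f0 w + f1 w) + f2 w) z
        = real_cond_exp \<gamma> F (\<lambda>w. f0 w + f1 w) z + real_cond_exp \<gamma> F f2 z"
      using real_cond_exp_add[of "\<lambda>w. f0 w + f1 w" f2] if0 if1 if2 by auto
    have e2: "AE z in \<gamma>. real_cond_exp \<gamma> F (\<lambda>w. f0 w + f1 w) z
        = real_cond_exp \<gamma> F f0 z + real_cond_exp \<gamma> F f1 z"
      using real_cond_exp_add[of f0 f1] if0 if1 by auto
    have e3: "AE z in \<gamma>. real_cond_exp \<gamma> F f0 z = f0 z"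
      using real_cond_exp_F_meas[OF if0 f0F] .
    have e4: "AE z in \<gamma>. real_cond_exp \<gamma> F f1 z = (fst (fst z) - a) * real_cond_exp \<gamma> F (\<lambda>w. snd (snd w)) z"
      using real_cond_exp_mult[OF aF Y2] if1 unfolding f1_def by auto
    have e5: "AE z in \<gamma>. real_cond_exp \<gamma> F f2 z = (snd (fst z) - b) * real_cond_exp \<gamma> F (\<lambda>w. fst (snd w)) z"
      using real_cond_exp_mult[OF bF Y1] if2 unfolding f2_def by auto
    show ?thesis unfolding keq using e1 e2 e3 e4 e5 ce1 ce2 unfolding F_def[symmetric]
      by eventually_elim (simp add: g cost_def f0_def algebra_simps)
  qed
  have Gne: "G \<noteq> {}" using mm_nonempty[OF assms(3)] .
  obtain D where D: "countable D" "D \<subseteq> G" "D \<noteq> {}" and phiD: "\<And>y. phi G y = (INF g\<in>D. ereal (cost g y))"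
    using phi_countable[OF Gne] by blast
  have phi_eq: "phi G = (\<lambda>y. INF g\<in>D. ereal (cost g y))" by (rule ext) (rule phiD)
  have phim[measurable]: "phi G \<in> borel_measurable borel"
    unfolding phi_eq
  proof (rule borel_measurable_INF)
    fix g :: "real \<times> real"
    show "(\<lambda>y. ereal (cost g y)) \<in> borel_measurable borel" unfolding cost_def by measurable
  qed (use D in auto)
  have phi0: "phi G y \<le> 0" for y using phi_le0[OF assms(3)] .
  have nfin: "AE z in \<gamma>. nn_cond_exp \<gamma> F (\<lambda>x. ennreal (q x)) z \<noteq> \<infinity>" if iq: "integrable \<gamma> q" for q
  proof -
    have [measurable]: "q \<in> borel_measurable \<gamma>" using iq by auto
    have "(\<integral>\<^sup>+ x. nn_cond_exp \<gamma> F (\<lambda>x. ennreal (q x)) x \<partial>\<gamma>) = (\<integral>\<^sup>+ x. ennreal (q x) \<partial>\<gamma>)"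
      using nn_cond_exp_intg[of "\<lambda>_. 1" "\<lambda>x. ennreal (q x)"] by simp
    also have "\<dots> \<le> (\<integral>\<^sup>+ x. ennreal (norm (q x)) \<partial>\<gamma>)" by (rule nn_integral_mono) simp
    also have "\<dots> < \<infinity>" using iq by (simp add: integrable_iff_bounded)
    finally show ?thesis by (intro nn_integral_PInf_AE) auto
  qed
  define h where "h = (\<lambda>w. phi G (snd w) - ereal (cost (fst w) (snd w)))"
  have hm[measurable]: "h \<in> borel_measurable \<gamma>" unfolding h_def by measurable
  define Ah where "Ah = nn_cond_exp \<gamma> F (\<lambda>v. e2ennreal (h v))"
  define Bh where "Bh = nn_cond_exp \<gamma> F (\<lambda>v. e2ennreal (- h v))"
  have kg: "AE z in \<gamma>. Ah z \<le> nn_cond_exp \<gamma> F (\<lambda>x. ennreal (cost g (snd x) - cost (fst x) (snd x))) z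
      \<and> nn_cond_exp \<gamma> F (\<lambda>x. ennreal (cost g (snd x) - cost (fst x) (snd x))) z \<noteq> \<infinity>
      \<and> enn2ereal (Ah z) - enn2ereal (Bh z) \<le> ereal (cost g (fst z))" if gG: "g \<in> G" for g
  proof -
    define k where "k = (\<lambda>w. cost g (snd w) - cost (fst w) (snd w))"
    have km[measurable]: "k \<in> borel_measurable \<gamma>" unfolding k_def by measurable
    have ik: "integrable \<gamma> k"
    proof -
      have ceq: "(\<lambda>w. cost g (snd w)) = (\<lambda>w. fst g * snd g - fst g * snd (snd w) - snd g * fst (snd w) + fst (snd w) * snd (snd w))"
        by (rule ext) (simp add: cost_def algebra_simps)
      have iYY: "integrable \<gamma> (\<lambda>w. fst (snd w) * snd (snd w))"
        by (rule iprod) (auto simp: nsq intro: Y1 Y2 add_increasing sq0)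
      have "integrable \<gamma> (\<lambda>w. fst g * snd g - fst g * snd (snd w) - snd g * fst (snd w) + fst (snd w) * snd (snd w))"
        using iY1 iY2 iYY by (intro Bochner_Integration.integrable_add Bochner_Integration.integrable_diff integrable_mult_right) auto
      then have "integrable \<gamma> (\<lambda>w. cost g (snd w))" by (simp only: ceq)
      then show ?thesis unfolding k_def using ic by auto
    qed
    have hk: "h w \<le> ereal (k w)" for w
    proof -
      have "phi G (snd w) \<le> ereal (cost g (snd w))" unfolding phi_def by (rule INF_lower[OF gG])
      then show ?thesis unfolding h_def k_def by (cases "phi G (snd w)") auto
    qed
    have A1: "AE z in \<gamma>. Ah z \<le> nn_cond_exp \<gamma> F (\<lambda>x. ennreal (k x)) z"
      unfolding Ah_def
      by (rule nn_cond_exp_mono) (auto intro!: AE_I2 e2ennreal_mono[OF hk, simplified])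
    have B1: "AE z in \<gamma>. nn_cond_exp \<gamma> F (\<lambda>x. ennreal (- k x)) z \<le> Bh z"
      unfolding Bh_def
    proof (rule nn_cond_exp_mono)
      show "AE x in \<gamma>. ennreal (- k x) \<le> e2ennreal (- h x)"
      proof (rule AE_I2)
        fix x have "ereal (- k x) \<le> - h x" using hk[of x] by (cases "h x") auto
        then show "ennreal (- k x) \<le> e2ennreal (- h x)" using e2ennreal_mono by fastforce
      qed
    qed auto
    have fA: "AE z in \<gamma>. nn_cond_exp \<gamma> F (\<lambda>x. ennreal (k x)) z \<noteq> \<infinity>" using nfin[OF ik] .
    have fB: "AE z in \<gamma>. nn_cond_exp \<gamma> F (\<lambda>x. ennreal (- k x)) z \<noteq> \<infinity>" using nfin[of "\<lambda>x. - k x"] ik by auto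
    have rkg: "AE z in \<gamma>. real_cond_exp \<gamma> F k z = cost g (fst z)" unfolding k_def by (rule rk)
    have keq2: "(\<lambda>x. ennreal (cost g (snd x) - cost (fst x) (snd x))) = (\<lambda>x. ennreal (k x))"
      by (simp add: k_def)
    show ?thesis unfolding keq2 using A1 B1 fA fB rkg
    proof eventually_elim
      case (elim z)
      then show ?case
        using pw1[of "Ah z" "nn_cond_exp \<gamma> F (\<lambda>x. ennreal (k x)) z" "nn_cond_exp \<gamma> F (\<lambda>x. ennreal (- k x)) z" "Bh z" "cost g (fst z)"]
        by (auto simp: real_cond_exp_def)
    qed
  qed
  have AEall: "AE z in \<gamma>. \<forall>g\<in>D. enn2ereal (Ah z) - enn2ereal (Bh z) \<le> ereal (cost g (fst z))"
    using D kg by (subst AE_ball_countable) auto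
  have part1: "AE z in \<gamma>. enn2ereal (Ah z) - enn2ereal (Bh z) \<le> phi G (fst z)"
    using AEall by eventually_elim (auto simp: phiD intro: INF_greatest)
  have first: "AE z in \<gamma>.
            ereal_cond_exp \<gamma> (sigma_x \<gamma>) (\<lambda>w. phi G (snd w) - ereal (cost (fst w) (snd w))) z
              \<le> phi G (fst z) \<and> phi G (fst z) \<le> 0"
    using part1 unfolding ereal_cond_exp_def Ah_def Bh_def h_def F_def by (auto simp: phi0)
  obtain g0 where g0: "g0 \<in> D" using D by blast
  then have g0G: "g0 \<in> G" using D by blast
  define k0 where "k0 = (\<lambda>w. cost g0 (snd w) - cost (fst w) (snd w))"
  have ik0: "integrable \<gamma> k0"
  proof -
    have ceq: "(\<lambda>w. cost g0 (snd w)) = (\<lambda>w. fst g0 * snd g0 - fst g0 * snd (snd w) - snd g0 * fst (snd w) + fst (snd w) * snd (snd w))"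
      by (rule ext) (simp add: cost_def algebra_simps)
    have iYY: "integrable \<gamma> (\<lambda>w. fst (snd w) * snd (snd w))"
      by (rule iprod) (auto simp: nsq intro: Y1 Y2 add_increasing sq0)
    have "integrable \<gamma> (\<lambda>w. fst g0 * snd g0 - fst g0 * snd (snd w) - snd g0 * fst (snd w) + fst (snd w) * snd (snd w))"
      using iY1 iY2 iYY by (intro Bochner_Integration.integrable_add Bochner_Integration.integrable_diff integrable_mult_right) auto
    then have "integrable \<gamma> (\<lambda>w. cost g0 (snd w))" by (simp only: ceq)
    then show ?thesis unfolding k0_def using ic by auto
  qed
  have hk0: "e2ennreal (h w) \<le> ennreal (k0 w)" for w
  proof -
    have "phi G (snd w) \<le> ereal (cost g0 (snd w))" unfolding phi_def by (rule INF_lower[OF g0G])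
    then have "h w \<le> ereal (k0 w)" unfolding h_def k0_def by (cases "phi G (snd w)") auto
    then show ?thesis using e2ennreal_mono by fastforce
  qed
  have AhFin: "AE z in \<gamma>. Ah z \<noteq> \<infinity>"
    using kg[OF g0G] by eventually_elim (metis infinity_ennreal_def neq_top_trans)
  have pt: "AE z in \<gamma>. e2ennreal (- phi G (fst z)) + Ah z \<le> Bh z"
    using part1 AhFin by eventually_elim (rule pw2, auto simp: phi0)
  have [measurable]: "Ah \<in> borel_measurable \<gamma>" "Bh \<in> borel_measurable \<gamma>" unfolding Ah_def Bh_def by measurable
  define PX where "PX = (\<integral>\<^sup>+ z. e2ennreal (- phi G (fst z)) \<partial>\<gamma>)"
  define PY where "PY = (\<integral>\<^sup>+ z. e2ennreal (- phi G (snd z)) \<partial>\<gamma>)"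
  define Hp where "Hp = (\<integral>\<^sup>+ z. e2ennreal (h z) \<partial>\<gamma>)"
  define Hm where "Hm = (\<integral>\<^sup>+ z. e2ennreal (- h z) \<partial>\<gamma>)"
  define Cp where "Cp = (\<integral>\<^sup>+ z. ennreal (cost (fst z) (snd z)) \<partial>\<gamma>)"
  define Cm where "Cm = (\<integral>\<^sup>+ z. ennreal (- cost (fst z) (snd z)) \<partial>\<gamma>)"
  have intA: "(\<integral>\<^sup>+ z. Ah z \<partial>\<gamma>) = Hp"
    using nn_cond_exp_intg[of "\<lambda>_. 1" "\<lambda>v. e2ennreal (h v)"] unfolding Ah_def Hp_def by simp
  have intB: "(\<integral>\<^sup>+ z. Bh z \<partial>\<gamma>) = Hm"
    using nn_cond_exp_intg[of "\<lambda>_. 1" "\<lambda>v. e2ennreal (- h v)"] unfolding Bh_def Hm_def by simp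
  have i1: "PX + Hp \<le> Hm"
  proof -
    have "PX + Hp = (\<integral>\<^sup>+ z. e2ennreal (- phi G (fst z)) + Ah z \<partial>\<gamma>)"
      unfolding PX_def intA[symmetric] by (rule nn_integral_add[symmetric]) auto
    also have "\<dots> \<le> (\<integral>\<^sup>+ z. Bh z \<partial>\<gamma>)" by (rule nn_integral_mono_AE[OF pt])
    finally show ?thesis unfolding intB .
  qed
  have i2: "Hm + Cm = Hp + Cp + PY"
  proof -
    have "Hm + Cm = (\<integral>\<^sup>+ z. e2ennreal (- h z) + ennreal (- cost (fst z) (snd z)) \<partial>\<gamma>)"
      unfolding Hm_def Cm_def by (rule nn_integral_add[symmetric]) auto
    also have "\<dots> = (\<integral>\<^sup>+ z. (e2ennreal (h z) + ennreal (cost (fst z) (snd z))) + e2ennreal (- phi G (snd z)) \<partial>\<gamma>)"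
      unfolding h_def by (rule nn_integral_cong) (rule pw3[OF phi0])
    also have "\<dots> = (\<integral>\<^sup>+ z. e2ennreal (h z) + ennreal (cost (fst z) (snd z)) \<partial>\<gamma>) + PY"
      unfolding PY_def by (rule nn_integral_add) auto
    also have "\<dots> = Hp + Cp + PY"
      unfolding Hp_def Cp_def by (subst nn_integral_add) auto
    finally show ?thesis .
  qed
  have Hpfin: "Hp \<noteq> \<infinity>"
  proof -
    have "Hp \<le> (\<integral>\<^sup>+ z. ennreal (norm (k0 z)) \<partial>\<gamma>)"
      unfolding Hp_def by (rule nn_integral_mono) (rule order_trans[OF hk0], simp)
    also have "\<dots> < \<infinity>" using ik0 by (simp add: integrable_iff_bounded)
    finally show ?thesis by simp
  qed
  have Cpfin: "Cp \<noteq> \<infinity>"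
  proof -
    have "Cp \<le> (\<integral>\<^sup>+ z. ennreal (norm (cost (fst z) (snd z))) \<partial>\<gamma>)"
      unfolding Cp_def by (rule nn_integral_mono) simp
    also have "\<dots> < \<infinity>" using ic by (simp add: integrable_iff_bounded)
    finally show ?thesis by simp
  qed
  have Cmfin: "Cm \<noteq> \<infinity>"
  proof -
    have "Cm \<le> (\<integral>\<^sup>+ z. ennreal (norm (cost (fst z) (snd z))) \<partial>\<gamma>)"
      unfolding Cm_def by (rule nn_integral_mono) simp
    also have "\<dots> < \<infinity>" using ic by (simp add: integrable_iff_bounded)
    finally show ?thesis by simp
  qed
  have i3: "PX + Cm \<le> Cp + PY"
  proof -
    have "Hp + (PX + Cm) \<le> Hm + Cm" using i1 by (metis add.commute add.left_commute add_right_mono)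
    also have "\<dots> = Hp + (Cp + PY)" using i2 by (simp add: add.assoc)
    finally show ?thesis using Hpfin by (simp add: ennreal_add_left_cancel_le infinity_ennreal_def)
  qed
  have intc: "(\<integral> w. cost (fst w) (snd w) \<partial>\<gamma>) = enn2real Cp - enn2real Cm"
    unfolding Cp_def Cm_def by (rule real_lebesgue_integral_def[OF ic])
  have eY: "ereal_integral \<nu> (phi G) = 0 - enn2ereal PY"
  proof -
    have "ereal_integral \<nu> (phi G) = enn2ereal (\<integral>\<^sup>+ v. e2ennreal (phi G v) \<partial>distr \<gamma> borel snd) - enn2ereal (\<integral>\<^sup>+ v. e2ennreal (- phi G v) \<partial>distr \<gamma> borel snd)"
      unfolding ereal_integral_def nu ..
    also have "\<dots> = 0 - enn2ereal PY"
      unfolding PY_def by (subst (1 2) nn_integral_distr) (auto simp: e2ennreal_neg phi0 zero_ennreal.rep_eq)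
    finally show ?thesis .
  qed
  have eX: "ereal_integral (distr \<gamma> borel fst) (phi G) = 0 - enn2ereal PX"
    unfolding ereal_integral_def PX_def by (subst (1 2) nn_integral_distr) (auto simp: e2ennreal_neg phi0 zero_ennreal.rep_eq)
  show ?thesis
    using first pw4[OF i3 Cpfin Cmfin] unfolding eY eX intc by simp
qed

end
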